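(* Let $n,g,k$ be integers with $g\geq 1$ and $1\leq k\leq n-2g-2$. Then the minimum number of edges of a connected graph $G$ of order $n$ having an $R_g$-cutset with $\kappa_g(G)=k$ equals $n-1$; that is, $s(n,k)=n-1$.
   Context: All graphs are finite and simple. A set $S\subseteq V(G)$ is a cutset if $G-S$ is disconnected. For a non-negative integer $g$, a cutset $S$ is an $R_g$-cutset if every connected component of $G-S$ has at least $g+1$ vertices. If $G$ has at least one $R_g$-cutset, the $g$-extra connectivity $\kappa_g(G)$ is the minimum cardinality of an $R_g$-cutset of $G$. For fixed $g$, $s(n,k)=\min\{|E(G)|: G \text{ connected of order } n,\ \kappa_g(G)=k\}$. *)

theory Defs
  imports Main
begin

definition sgraph :: "'a set \<Rightarrow> 'a set set \<Rightarrow> bool" where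
  "sgraph V E \<longleftrightarrow> finite V \<and> (\<forall>e\<in>E. \<exists>u v. e = {u, v} \<and> u \<in> V \<and> v \<in> V \<and> u \<noteq> v)"

definition reach_in :: "'a set set \<Rightarrow> 'a set \<Rightarrow> ('a \<times> 'a) set" where
  "reach_in E W = ({(x, y). {x, y} \<in> E \<and> x \<in> W \<and> y \<in> W})\<^sup>*"

definition connected_graph :: "'a set \<Rightarrow> 'a set set \<Rightarrow> bool" where
  "connected_graph V E \<longleftrightarrow> V \<noteq> {} \<and> (\<forall>u\<in>V. \<forall>v\<in>V. (u, v) \<in> reach_in E V)"

definition component_in :: "'a set set \<Rightarrow> 'a set \<Rightarrow> 'a \<Rightarrow> 'a set" where
  "component_in E W u = {v \<in> W. (u, v) \<in> reach_in E W}"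

definition cutset :: "'a set \<Rightarrow> 'a set set \<Rightarrow> 'a set \<Rightarrow> bool" where
  "cutset V E S \<longleftrightarrow> S \<subseteq> V \<and> (\<exists>u\<in>V - S. \<exists>v\<in>V - S. (u, v) \<notin> reach_in E (V - S))"

definition Rg_cutset :: "nat \<Rightarrow> 'a set \<Rightarrow> 'a set set \<Rightarrow> 'a set \<Rightarrow> bool" where
  "Rg_cutset g V E S \<longleftrightarrow> cutset V E S \<and> (\<forall>u\<in>V - S. card (component_in E (V - S) u) \<ge> g + 1)"

text \<open>g-extra connectivity (meaningful when an R_g-cutset exists).\<close>
definition kappa :: "nat \<Rightarrow> 'a set \<Rightarrow> 'a set set \<Rightarrow> nat" where
  "kappa g V E = (LEAST m. \<exists>S. Rg_cutset g V E S \<and> card S = m)"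

text \<open>s(n,k) for fixed g; graphs on vertex type nat (any finite graph is isomorphic to one).\<close>
definition s_min :: "nat \<Rightarrow> nat \<Rightarrow> nat \<Rightarrow> nat" where
  "s_min g n k = Inf {card E | (V :: nat set) E. sgraph V E \<and> card V = n \<and> connected_graph V E
                      \<and> (\<exists>S. Rg_cutset g V E S) \<and> kappa g V E = k}"

end

theory Submission
  imports Defs
begin

lemma reach_in_sym:
  assumes "(x,y) \<in> reach_in E W" shows "(y,x) \<in> reach_in E W"
proof -
  define R where "R = {(x, y). {x, y} \<in> E \<and> x \<in> W \<and> y \<in> W}"
  have c: "R\<inverse> = R" unfolding R_def by (auto simp: insert_commute)
  have "(x,y) \<in> R\<^sup>*" using assms by (simp add: reach_in_def R_def)
  hence "(y,x) \<in> (R\<inverse>)\<^sup>*" by (simp add: rtrancl_converse)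
  thus ?thesis using c by (simp add: reach_in_def R_def)
qed

lemma edge_reach:
  assumes "{x,y} \<in> E" "x \<in> W" "y \<in> W" shows "(x,y) \<in> reach_in E W"
  using assms unfolding reach_in_def by (intro r_into_rtrancl) auto

lemma reach_trans:
  "(x,y) \<in> reach_in E W \<Longrightarrow> (y,z) \<in> reach_in E W \<Longrightarrow> (x,z) \<in> reach_in E W"
  unfolding reach_in_def by (rule rtrancl_trans)

lemma reach_closed:
  assumes "(u,v) \<in> reach_in E W" "u \<in> A"
    "\<And>x y. x \<in> A \<Longrightarrow> {x,y} \<in> E \<Longrightarrow> x \<in> W \<Longrightarrow> y \<in> W \<Longrightarrow> y \<in> A"
  shows "v \<in> A"
  using assms(1) unfolding reach_in_def
proof (induction rule: rtrancl_induct)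
  case base then show ?case using assms(2) .
next
  case (step y z) then show ?case using assms(3) by auto
qed

lemma tree_bound:
  assumes "sgraph V E" "connected_graph V E"
  shows "card V - 1 \<le> card E"
proof -
  define R where "R = {(x, y). {x, y} \<in> E \<and> x \<in> V \<and> y \<in> V}"
  obtain r where r: "r \<in> V" using assms(2) unfolding connected_graph_def by auto
  have reach: "(v,r) \<in> R\<^sup>*" if vV: "v \<in> V" for v
  proof -
    have "(v,r) \<in> reach_in E V" using assms(2) r vV unfolding connected_graph_def by blast
    thus ?thesis by (simp add: reach_in_def R_def)
  qed
  define d where "d v = (LEAST m. (v,r) \<in> R^^m)" for v
  have dex: "(v,r) \<in> R^^(d v)" if "v \<in> V" for v
  proof -
    have "\<exists>m. (v,r) \<in> R^^m" using reach[OF that] by (simp add: rtrancl_power)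
    thus ?thesis unfolding d_def by (rule LeastI_ex)
  qed
  have step: "\<exists>u. (v,u) \<in> R \<and> d u < d v" if vV: "v \<in> V" and vr: "v \<noteq> r" for v
  proof (cases "d v")
    case 0 then show ?thesis using dex[OF vV] vr by simp
  next
    case (Suc m)
    then obtain u where u: "(v,u) \<in> R" "(u,r) \<in> R^^m" using dex[OF vV]
      by (metis relpow_Suc_D2)
    have "d u \<le> m" unfolding d_def using u(2) by (rule Least_le)
    thus ?thesis using u Suc by auto
  qed
  define p where "p v = (SOME u. (v,u) \<in> R \<and> d u < d v)" for v
  have pv: "(v, p v) \<in> R \<and> d (p v) < d v" if vV: "v \<in> V - {r}" for v
  proof -
    have "\<exists>u. (v,u) \<in> R \<and> d u < d v" using step vV by blast
    thus ?thesis unfolding p_def by (rule someI_ex)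
  qed
  have inj: "inj_on (\<lambda>v. {v, p v}) (V - {r})"
  proof (rule inj_onI)
    fix v w assume v: "v \<in> V - {r}" and w: "w \<in> V - {r}" and eq: "{v, p v} = {w, p w}"
    show "v = w"
    proof (rule ccontr)
      assume "v \<noteq> w"
      then have "v = p w" "p v = w" using eq by (auto simp: doubleton_eq_iff)
      thus False using pv[OF v] pv[OF w] by auto
    qed
  qed
  have sub: "(\<lambda>v. {v, p v}) ` (V - {r}) \<subseteq> E" using pv unfolding R_def by auto
  have finV: "finite V" using assms(1) unfolding sgraph_def by auto
  have "E \<subseteq> Pow V" using assms(1) unfolding sgraph_def by auto
  hence finE: "finite E" using finV by (simp add: finite_subset)
  have "card (V - {r}) \<le> card E"
    using card_inj_on_le[OF inj sub finE] .
  thus ?thesis using r finV by simp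
qed

lemma neighbor:
  assumes "Rg_cutset g V E S" "g \<ge> 1" "x \<in> V - S"
  shows "\<exists>y. {x,y} \<in> E \<and> y \<in> V - S"
proof -
  let ?C = "component_in E (V - S) x"
  have c: "card ?C \<ge> 2" using assms unfolding Rg_cutset_def by force
  have "\<exists>y\<in>?C. y \<noteq> x"
  proof (rule ccontr)
    assume "\<not> ?thesis"
    hence "?C \<subseteq> {x}" by auto
    hence "card ?C \<le> 1" using card_mono[of "{x}" ?C] by auto
    thus False using c by simp
  qed
  then obtain y where y: "(x,y) \<in> reach_in E (V - S)" "y \<noteq> x"
    unfolding component_in_def by auto
  then show ?thesis unfolding reach_in_def
    by (auto elim: converse_rtranclE)
qed

definition par :: "nat \<Rightarrow> nat \<Rightarrow> nat \<Rightarrow> nat" where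
  "par k g i = (if i \<le> k+1 then 0 else if i < k+2+g then 1 else 2)"

definition EE :: "nat \<Rightarrow> nat \<Rightarrow> nat \<Rightarrow> nat set set" where
  "EE n k g = (\<lambda>i. {i, par k g i}) ` {1..<n}"

lemma edge_iff:
  "{x,y} \<in> EE n k g \<longleftrightarrow> (1 \<le> x \<and> x < n \<and> y = par k g x) \<or> (1 \<le> y \<and> y < n \<and> x = par k g y)"
  unfolding EE_def by (auto simp: doubleton_eq_iff)

lemma par_lt: "k \<ge> 1 \<Longrightarrow> 1 \<le> i \<Longrightarrow> par k g i < i"
  unfolding par_def by auto

lemma par_le2: "par k g i \<le> 2"
  unfolding par_def by auto


lemma EE_sgraph: assumes k: "k \<ge> 1" shows "sgraph {0..<n} (EE n k g)"
  unfolding sgraph_def EE_def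
proof (intro conjI ballI)
  fix e assume "e \<in> (\<lambda>i. {i, par k g i}) ` {1..<n}"
  then obtain i where i: "i \<in> {1..<n}" "e = {i, par k g i}" by auto
  have "par k g i < i" using par_lt[OF k] i by simp
  thus "\<exists>u v. e = {u, v} \<and> u \<in> {0..<n} \<and> v \<in> {0..<n} \<and> u \<noteq> v" using i
    by (intro exI[of _ i] exI[of _ "par k g i"]) auto
qed simp

lemma reach0:
  assumes k: "k \<ge> 1" shows "i < n \<Longrightarrow> (i,0) \<in> reach_in (EE n k g) {0..<n}"
proof (induction i rule: less_induct)
  case (less i)
  show ?case
  proof (cases "i = 0")
    case True then show ?thesis by (simp add: reach_in_def)
  next
    case False
    have lt: "par k g i < i" using par_lt[OF k] False by simp
    have e: "{i, par k g i} \<in> EE n k g" using False less.prems by (simp add: edge_iff)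
    have "(i, par k g i) \<in> reach_in (EE n k g) {0..<n}"
      using edge_reach[OF e] lt less.prems by simp
    moreover have "(par k g i, 0) \<in> reach_in (EE n k g) {0..<n}"
      using less.IH[OF lt] lt less.prems by simp
    ultimately show ?thesis by (rule reach_trans)
  qed
qed

lemma EE_connected: "k \<ge> 1 \<Longrightarrow> 1 \<le> n \<Longrightarrow> connected_graph {0..<n} (EE n k g)"
proof -
  assume k: "k \<ge> 1" and n: "1 \<le> n"
  have "(u,v) \<in> reach_in (EE n k g) {0..<n}" if "u \<in> {0..<n}" "v \<in> {0..<n}" for u v
  proof -
    have "(u,0) \<in> reach_in (EE n k g) {0..<n}" using reach0[OF k] that by simp
    moreover have "(0,v) \<in> reach_in (EE n k g) {0..<n}"
      using reach_in_sym[OF reach0[OF k, of v n g]] that by simp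
    ultimately show ?thesis by (rule reach_trans)
  qed
  thus ?thesis unfolding connected_graph_def using n by auto
qed

lemma EE_card: "k \<ge> 1 \<Longrightarrow> card (EE n k g) = n - 1"
proof -
  assume k: "k \<ge> 1"
  have "inj_on (\<lambda>i. {i, par k g i}) {1..<n}"
  proof (rule inj_onI)
    fix i j assume i: "i \<in> {1..<n}" and j: "j \<in> {1..<n}" and eq: "{i, par k g i} = {j, par k g j}"
    show "i = j"
    proof (rule ccontr)
      assume "i \<noteq> j"
      then have "i = par k g j" "par k g i = j" using eq by (auto simp: doubleton_eq_iff)
      thus False using par_lt[OF k, of i g] par_lt[OF k, of j g] i j by auto
    qed
  qed
  thus ?thesis unfolding EE_def by (simp add: card_image)
qed


context
  fixes n k g :: nat
  assumes g: "g \<ge> 1" and k: "k \<ge> 1" and n: "k + 2*g + 2 \<le> n"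
begin

lemma W_eq: "{0..<n} - insert 0 {3..k+1} = insert 1 {k+2..<k+2+g} \<union> insert 2 {k+2+g..<n}"
  using k n g by auto

lemma A_to1: "x \<in> insert 1 {k+2..<k+2+g} \<Longrightarrow> (x,1) \<in> reach_in (EE n k g) ({0..<n} - insert 0 {3..k+1})"
proof -
  assume x: "x \<in> insert 1 {k+2..<k+2+g}"
  show ?thesis
  proof (cases "x = 1")
    case True then show ?thesis by (simp add: reach_in_def)
  next
    case False
    then have x2: "k+2 \<le> x" "x < k+2+g" using x by auto
    have "{x,1} \<in> EE n k g" unfolding edge_iff using x2 n by (simp add: par_def)
    moreover have "x \<in> {0..<n} - insert 0 {3..k+1}" "1 \<in> {0..<n} - insert 0 {3..k+1}"
      using x2 n k g by auto
    ultimately show ?thesis by (rule edge_reach)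
  qed
qed

lemma B_to2: "x \<in> insert 2 {k+2+g..<n} \<Longrightarrow> (x,2) \<in> reach_in (EE n k g) ({0..<n} - insert 0 {3..k+1})"
proof -
  assume x: "x \<in> insert 2 {k+2+g..<n}"
  show ?thesis
  proof (cases "x = 2")
    case True then show ?thesis by (simp add: reach_in_def)
  next
    case False
    then have x2: "k+2+g \<le> x" "x < n" using x by auto
    have "{x,2} \<in> EE n k g" unfolding edge_iff using x2 n by (simp add: par_def)
    moreover have "x \<in> {0..<n} - insert 0 {3..k+1}" "2 \<in> {0..<n} - insert 0 {3..k+1}"
      using x2 n k g by auto
    ultimately show ?thesis by (rule edge_reach)
  qed
qed

lemma closedA: "x \<in> insert 1 {k+2..<k+2+g} \<Longrightarrow> {x,y} \<in> EE n k g \<Longrightarrow> y \<in> {0..<n} - insert 0 {3..k+1}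
   \<Longrightarrow> y \<in> insert 1 {k+2..<k+2+g}"
  unfolding edge_iff par_def using k by (auto split: if_splits)

lemma closedB: "x \<in> insert 2 {k+2+g..<n} \<Longrightarrow> {x,y} \<in> EE n k g \<Longrightarrow> y \<in> {0..<n} - insert 0 {3..k+1}
   \<Longrightarrow> y \<in> insert 2 {k+2+g..<n}"
  unfolding edge_iff par_def using k by (auto split: if_splits)


lemma compA: assumes u: "u \<in> insert 1 {k+2..<k+2+g}"
  shows "component_in (EE n k g) ({0..<n} - insert 0 {3..k+1}) u = insert 1 {k+2..<k+2+g}"
proof
  show "component_in (EE n k g) ({0..<n} - insert 0 {3..k+1}) u \<subseteq> insert 1 {k+2..<k+2+g}"
  proof
    fix v assume "v \<in> component_in (EE n k g) ({0..<n} - insert 0 {3..k+1}) u"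
    hence r: "(u,v) \<in> reach_in (EE n k g) ({0..<n} - insert 0 {3..k+1})"
      unfolding component_in_def by simp
    show "v \<in> insert 1 {k+2..<k+2+g}" by (rule reach_closed[OF r u]) (rule closedA; assumption)
  qed
  show "insert 1 {k+2..<k+2+g} \<subseteq> component_in (EE n k g) ({0..<n} - insert 0 {3..k+1}) u"
  proof
    fix v assume v: "v \<in> insert 1 {k+2..<k+2+g}"
    have "(u,v) \<in> reach_in (EE n k g) ({0..<n} - insert 0 {3..k+1})"
      using reach_trans[OF A_to1[OF u] reach_in_sym[OF A_to1[OF v]]] .
    moreover have "v \<in> {0..<n} - insert 0 {3..k+1}" using v W_eq by auto
    ultimately show "v \<in> component_in (EE n k g) ({0..<n} - insert 0 {3..k+1}) u"
      unfolding component_in_def by simp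
  qed
qed

lemma compB: assumes u: "u \<in> insert 2 {k+2+g..<n}"
  shows "component_in (EE n k g) ({0..<n} - insert 0 {3..k+1}) u = insert 2 {k+2+g..<n}"
proof
  show "component_in (EE n k g) ({0..<n} - insert 0 {3..k+1}) u \<subseteq> insert 2 {k+2+g..<n}"
  proof
    fix v assume "v \<in> component_in (EE n k g) ({0..<n} - insert 0 {3..k+1}) u"
    hence r: "(u,v) \<in> reach_in (EE n k g) ({0..<n} - insert 0 {3..k+1})"
      unfolding component_in_def by simp
    show "v \<in> insert 2 {k+2+g..<n}" by (rule reach_closed[OF r u]) (rule closedB; assumption)
  qed
  show "insert 2 {k+2+g..<n} \<subseteq> component_in (EE n k g) ({0..<n} - insert 0 {3..k+1}) u"
  proof
    fix v assume v: "v \<in> insert 2 {k+2+g..<n}"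
    have "(u,v) \<in> reach_in (EE n k g) ({0..<n} - insert 0 {3..k+1})"
      using reach_trans[OF B_to2[OF u] reach_in_sym[OF B_to2[OF v]]] .
    moreover have "v \<in> {0..<n} - insert 0 {3..k+1}" using v W_eq by auto
    ultimately show "v \<in> component_in (EE n k g) ({0..<n} - insert 0 {3..k+1}) u"
      unfolding component_in_def by simp
  qed
qed

lemma cardA: "card (insert 1 {k+2..<k+2+g}) = g + 1"
  using k by simp

lemma cardB: "card (insert 2 {k+2+g..<n}) \<ge> g + 1"
  using k n by simp

lemma S0_cut: "Rg_cutset g {0..<n} (EE n k g) (insert 0 {3..k+1})"
proof -
  have sub: "insert 0 {3..k+1} \<subseteq> {0..<n}" using n by auto
  have m1: "1 \<in> {0..<n} - insert 0 {3..k+1}" and m2: "2 \<in> {0..<n} - insert 0 {3..k+1}" using n k g by auto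
  have nr: "(1, 2) \<notin> reach_in (EE n k g) ({0..<n} - insert 0 {3..k+1})"
  proof
    assume "(1, 2) \<in> reach_in (EE n k g) ({0..<n} - insert 0 {3..k+1})"
    hence "2 \<in> component_in (EE n k g) ({0..<n} - insert 0 {3..k+1}) 1"
      unfolding component_in_def using m2 by auto
    thus False using compA[of 1] k by simp
  qed
  have cs: "cutset {0..<n} (EE n k g) (insert 0 {3..k+1})"
    unfolding cutset_def using sub m1 m2 nr by blast
  have big: "g + 1 \<le> card (component_in (EE n k g) ({0..<n} - insert 0 {3..k+1}) u)"
    if u: "u \<in> {0..<n} - insert 0 {3..k+1}" for u
  proof -
    have "u \<in> insert 1 {k+2..<k+2+g} \<or> u \<in> insert 2 {k+2+g..<n}" using W_eq u by auto
    thus ?thesis using compA compB cardA cardB by auto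
  qed
  show ?thesis unfolding Rg_cutset_def using cs big by blast
qed

lemma S0_sub: assumes S: "Rg_cutset g {0..<n} (EE n k g) S"
  shows "insert 0 {3..k+1} \<subseteq> S"
proof -
  have S0: "0 \<in> S"
  proof (rule ccontr)
    assume nS: "0 \<notin> S"
    let ?W = "{0..<n} - S"
    have to0: "(w,0) \<in> reach_in (EE n k g) ?W" if w: "w \<in> ?W" for w
    proof (cases "w = 0")
      case True then show ?thesis by (simp add: reach_in_def)
    next
      case False
      show ?thesis
      proof (cases "w \<le> k+1")
        case True
        have "{w,0} \<in> EE n k g" unfolding edge_iff using True False w by (simp add: par_def)
        thus ?thesis using w nS by (intro edge_reach) auto
      next
        case False2: False
        obtain y where y: "{w,y} \<in> EE n k g" "y \<in> ?W" using neighbor[OF S g w] by blast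
        have yp: "y = par k g w"
        proof -
          have "w \<noteq> par k g y" using par_le2[of k g y] False2 k by linarith
          thus ?thesis using y(1) unfolding edge_iff by blast
        qed
        have y12: "y = 1 \<or> y = 2" using yp False2 unfolding par_def by auto
        have "{y,0} \<in> EE n k g" unfolding edge_iff using y12 n k by (auto simp: par_def)
        hence y0: "(y,0) \<in> reach_in (EE n k g) ?W" using y(2) nS by (intro edge_reach) auto
        have wy: "(w,y) \<in> reach_in (EE n k g) ?W" using y w by (intro edge_reach) auto
        show ?thesis by (rule reach_trans[OF wy y0])
      qed
    qed
    obtain u v where uv: "u \<in> ?W" "v \<in> ?W" "(u,v) \<notin> reach_in (EE n k g) ?W"
    proof -
      have "cutset {0..<n} (EE n k g) S" using S unfolding Rg_cutset_def by simp
      thus ?thesis using that unfolding cutset_def by blast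
    qed
    have "(u,v) \<in> reach_in (EE n k g) ?W"
      by (rule reach_trans[OF to0[OF uv(1)] reach_in_sym[OF to0[OF uv(2)]]])
    thus False using uv(3) by simp
  qed
  have "i \<in> S" if i: "i \<in> {3..k+1}" for i
  proof (rule ccontr)
    assume "i \<notin> S"
    hence iW: "i \<in> {0..<n} - S" using i n by auto
    obtain y where y: "{i,y} \<in> EE n k g" "y \<in> {0..<n} - S" using neighbor[OF S g iW] by blast
    have "i \<noteq> par k g y" using par_le2[of k g y] i by auto
    hence "y = par k g i" using y(1) unfolding edge_iff by blast
    hence "y = 0" using i unfolding par_def by auto
    thus False using y S0 by auto
  qed
  thus ?thesis using S0 by auto
qed

lemma kappa_EE: "kappa g {0..<n} (EE n k g) = k"
  unfolding kappa_def
proof (rule Least_equality)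
  have "card (insert 0 {3..k+1}) = k" using k by simp
  thus "\<exists>S. Rg_cutset g {0..<n} (EE n k g) S \<and> card S = k" using S0_cut by blast
  fix m assume "\<exists>S. Rg_cutset g {0..<n} (EE n k g) S \<and> card S = m"
  then obtain S where S: "Rg_cutset g {0..<n} (EE n k g) S" "card S = m" by blast
  have "S \<subseteq> {0..<n}" using S(1) unfolding Rg_cutset_def cutset_def by blast
  hence "card (insert 0 {3..k+1}) \<le> card S" using S0_sub[OF S(1)]
    by (meson card_mono finite_atLeastLessThan finite_subset)
  thus "k \<le> m" using S(2) k by simp
qed

end

theorem proposition5p1:
  fixes n g k :: nat
  assumes "g \<ge> 1" and "1 \<le> k" and "k + 2 * g + 2 \<le> n"
  shows "s_min g n k = n - 1"
proof -
  let ?X = "{card E | (V :: nat set) E. sgraph V E \<and> card V = n \<and> connected_graph V E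
                      \<and> (\<exists>S. Rg_cutset g V E S) \<and> kappa g V E = k}"
  have mem: "n - 1 \<in> ?X"
  proof -
    have "sgraph {0..<n} (EE n k g) \<and> card {0..<n} = n \<and> connected_graph {0..<n} (EE n k g)
        \<and> (\<exists>S. Rg_cutset g {0..<n} (EE n k g) S) \<and> kappa g {0..<n} (EE n k g) = k"
      using EE_sgraph[OF assms(2)] EE_connected[of k n g] S0_cut[OF assms(1,2,3)] kappa_EE[OF assms(1,2,3)] assms by auto
    moreover have "card (EE n k g) = n - 1" using EE_card[OF assms(2)] .
    ultimately show ?thesis
      by (intro CollectI exI[of _ "{0..<n}"] exI[of _ "EE n k g"]) simp
  qed
  have low: "n - 1 \<le> x" if "x \<in> ?X" for x
    using that tree_bound by auto
  show ?thesis unfolding s_min_def using cInf_eq_minimum[OF mem low] by simp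
qed

end
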